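(* Let $\mathcal{B}=(T,\bowtie)$ be a block and let $(B_1,\dots,B_k)$ be a legal partition of $T$. Then $\mathrm{LevelSchedule}(B_1,\dots,B_k)$ returns a valid schedule of $\mathcal{B}$.
   Context: A block consists of a finite set $T$ of transactions with a symmetric irreflexive conflict relation $\bowtie$ on $T$. A set $A\subseteq T$ is conflict-free if no two elements of $A$ conflict. A legal partition of $T$ is an ordered sequence $(B_1,\dots,B_k)$ of pairwise disjoint conflict-free sets whose union is $T$. A schedule is a set $\mathcal S\subseteq T\times T$ such that the directed graph $(T,\mathcal S)$ is acyclic; it is valid if for every pair $tx\bowtie tx'$ the graph $(T,\mathcal S)$ contains a directed path from $tx$ to $tx'$ or from $tx'$ to $tx$. $\mathrm{LevelSchedule}(B_1,\dots,B_k)$ is computed as follows: set $B_0=\emptyset$ and $\mathcal S=\emptyset$; for $i=1,\dots,k$ (increasing) and, for each such $i$, for $j=i-1,i-2,\dots,0$ (decreasing): let $E=\{(u,v)\in B_j\times B_i : u\bowtie v\}$, let $P$ be the set of pairs $(x,y)$ such that the current directed graph $(T,\mathcal S)$ contains a directed path from $x$ to $y$, and replace $\mathcal S$ by $\mathcal S\cup(E\setminus P)$. The output is the final $\mathcal S$. *)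

theory Defs
  imports Main
begin

definition block :: "'a set \<Rightarrow> ('a \<times> 'a) set \<Rightarrow> bool" where
  "block T C \<longleftrightarrow> finite T \<and> C \<subseteq> T \<times> T \<and> sym C \<and> irrefl C"

definition conflict_free :: "('a \<times> 'a) set \<Rightarrow> 'a set \<Rightarrow> bool" where
  "conflict_free C A \<longleftrightarrow> (\<forall>x\<in>A. \<forall>y\<in>A. (x, y) \<notin> C)"

(* legal partition (B_1,...,B_k) given as the list Bs = [B_1,...,B_k] *)
definition legal_partition :: "'a set \<Rightarrow> ('a \<times> 'a) set \<Rightarrow> 'a set list \<Rightarrow> bool" where
  "legal_partition T C Bs \<longleftrightarrow>
     (\<forall>i<length Bs. \<forall>j<length Bs. i \<noteq> j \<longrightarrow> Bs ! i \<inter> Bs ! j = {}) \<and>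
     (\<forall>B\<in>set Bs. conflict_free C B) \<and>
     \<Union> (set Bs) = T"

definition schedule :: "'a set \<Rightarrow> ('a \<times> 'a) set \<Rightarrow> bool" where
  "schedule T S \<longleftrightarrow> S \<subseteq> T \<times> T \<and> acyclic S"

definition valid_schedule :: "'a set \<Rightarrow> ('a \<times> 'a) set \<Rightarrow> ('a \<times> 'a) set \<Rightarrow> bool" where
  "valid_schedule T C S \<longleftrightarrow> schedule T S \<and>
     (\<forall>x y. (x, y) \<in> C \<longrightarrow> (x, y) \<in> S\<^sup>+ \<or> (y, x) \<in> S\<^sup>+)"

(* B_i with the convention B_0 = {} *)
definition level :: "'a set list \<Rightarrow> nat \<Rightarrow> 'a set" where
  "level Bs i = (if i = 0 then {} else Bs ! (i - 1))"

definition level_step :: "('a \<times> 'a) set \<Rightarrow> 'a set list \<Rightarrow> nat \<Rightarrow> nat \<Rightarrow> ('a \<times> 'a) set \<Rightarrow> ('a \<times> 'a) set" where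
  "level_step C Bs i j S =
     S \<union> ({(u, v). u \<in> level Bs j \<and> v \<in> level Bs i \<and> (u, v) \<in> C} - S\<^sup>+)"

definition LevelSchedule :: "('a \<times> 'a) set \<Rightarrow> 'a set list \<Rightarrow> ('a \<times> 'a) set" where
  "LevelSchedule C Bs =
     foldl (\<lambda>S i. foldl (\<lambda>S' j. level_step C Bs i j S') S (rev [0..<i]))
       {} [1..<length Bs + 1]"

end

theory Submission
  imports Defs
begin

lemma foldl_inv: "P S \<Longrightarrow> (\<And>S x. P S \<Longrightarrow> x \<in> set xs \<Longrightarrow> P (f S x)) \<Longrightarrow> P (foldl f S xs)"
  by (induction xs arbitrary: S) auto

lemma step_mono: "S \<subseteq> level_step C Bs i j S"
  unfolding level_step_def by auto

lemma inner_mono: "S \<subseteq> foldl (\<lambda>S' j. level_step C Bs i j S') S js"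
  by (rule foldl_inv[where P="\<lambda>X. S \<subseteq> X"]) (auto dest: subsetD[OF step_mono])

lemma outer_mono: "S \<subseteq> foldl (\<lambda>S i. foldl (\<lambda>S' j. level_step C Bs i j S') S (rev [0..<i])) S ks"
  by (rule foldl_inv[where P="\<lambda>X. S \<subseteq> X"]) (auto dest: subsetD[OF inner_mono])

lemma step_reach:
  assumes "(u,v) \<in> C" "u \<in> level Bs j" "v \<in> level Bs i"
  shows "(u,v) \<in> (level_step C Bs i j S)\<^sup>+"
proof (cases "(u,v) \<in> S\<^sup>+")
  case True then show ?thesis using trancl_mono[OF _ step_mono] by blast
next
  case False
  then have "(u,v) \<in> level_step C Bs i j S" using assms unfolding level_step_def by auto
  then show ?thesis by blast
qed

lemma inner_reach:
  "j \<in> set js \<Longrightarrow> (u,v) \<in> C \<Longrightarrow> u \<in> level Bs j \<Longrightarrow> v \<in> level Bs i \<Longrightarrow>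
   (u,v) \<in> (foldl (\<lambda>S' j. level_step C Bs i j S') S js)\<^sup>+"
proof (induction js arbitrary: S)
  case Nil then show ?case by simp
next
  case (Cons a js)
  show ?case
  proof (cases "j = a")
    case True
    then have "(u,v) \<in> (level_step C Bs i a S)\<^sup>+" using step_reach Cons.prems by metis
    then show ?thesis using trancl_mono[OF _ inner_mono] by simp blast
  next
    case False then show ?thesis using Cons by simp
  qed
qed

lemma outer_reach:
  "i \<in> set ks \<Longrightarrow> j < i \<Longrightarrow> (u,v) \<in> C \<Longrightarrow> u \<in> level Bs j \<Longrightarrow> v \<in> level Bs i \<Longrightarrow>
   (u,v) \<in> (foldl (\<lambda>S i. foldl (\<lambda>S' j. level_step C Bs i j S') S (rev [0..<i])) S ks)\<^sup>+"
proof (induction ks arbitrary: S)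
  case Nil then show ?case by simp
next
  case (Cons a ks)
  show ?case
  proof (cases "i = a")
    case True
    then have "(u,v) \<in> (foldl (\<lambda>S' j. level_step C Bs a j S') S (rev [0..<a]))\<^sup>+"
      using inner_reach[of j "rev [0..<a]"] Cons.prems by auto
    then show ?thesis using trancl_mono[OF _ outer_mono] by simp blast
  next
    case False then show ?thesis using Cons by simp
  qed
qed

theorem lemma1:
  fixes T :: "'a set" and C :: "('a \<times> 'a) set" and Bs :: "'a set list"
  assumes "block T C"
    and "legal_partition T C Bs"
  shows "valid_schedule T C (LevelSchedule C Bs)"
proof -
  have CT: "C \<subseteq> T \<times> T" using assms(1) unfolding block_def by auto
  have disj: "\<And>i j. i < length Bs \<Longrightarrow> j < length Bs \<Longrightarrow> i \<noteq> j \<Longrightarrow> Bs ! i \<inter> Bs ! j = {}"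
    and cf: "\<And>B. B \<in> set Bs \<Longrightarrow> conflict_free C B"
    and un: "\<Union> (set Bs) = T"
    using assms(2) unfolding legal_partition_def by auto
  define idx where "idx x = (SOME k. k < length Bs \<and> x \<in> Bs ! k)" for x
  have idx: "idx x = a" if "a < length Bs" "x \<in> Bs ! a" for x a
  proof -
    have ex: "\<exists>k. k < length Bs \<and> x \<in> Bs ! k" using that by blast
    have "idx x < length Bs \<and> x \<in> Bs ! (idx x)"
      unfolding idx_def by (rule someI_ex[OF ex])
    then show ?thesis using disj[of a "idx x"] that by blast
  qed
  define R where "R = {(u,v). idx u < idx v} \<inter> (T \<times> T)"
  define G where "G = (\<lambda>S i. foldl (\<lambda>S' j. level_step C Bs i j S') S (rev [0..<i]))"
  have stepR: "level_step C Bs i j S \<subseteq> R" if "S \<subseteq> R" "j < i" "i \<le> length Bs" for S i j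
  proof
    fix p assume p: "p \<in> level_step C Bs i j S"
    show "p \<in> R"
    proof (cases "p \<in> S")
      case True then show ?thesis using that by blast
    next
      case False
      then obtain u v where pe: "p = (u,v)" "u \<in> level Bs j" "v \<in> level Bs i" "(u,v) \<in> C"
        using p unfolding level_step_def by auto
      then have "j \<noteq> 0" unfolding level_def by (auto split: if_splits)
      then have "u \<in> Bs ! (j - 1)" "v \<in> Bs ! (i - 1)" using pe that unfolding level_def by auto
      then have "idx u = j - 1" "idx v = i - 1" using idx that \<open>j \<noteq> 0\<close> by auto
      then show ?thesis using pe CT \<open>j \<noteq> 0\<close> that unfolding R_def by auto
    qed
  qed
  have GR: "G S i \<subseteq> R" if "S \<subseteq> R" "i \<le> length Bs" for S i
    unfolding G_def by (rule foldl_inv[where P="\<lambda>X. X \<subseteq> R"]) (use that stepR in auto)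
  have LR: "LevelSchedule C Bs \<subseteq> R"
    unfolding LevelSchedule_def G_def[symmetric]
  proof (rule foldl_inv[where P="\<lambda>X. X \<subseteq> R"])
    fix S x assume "S \<subseteq> R" "x \<in> set [1..<length Bs + 1]"
    then have "x \<le> length Bs" by auto
    then show "G S x \<subseteq> R" using GR[of S x] \<open>S \<subseteq> R\<close> by blast
  qed simp
  have "trans R" unfolding R_def trans_def by auto
  then have "(LevelSchedule C Bs)\<^sup>+ \<subseteq> R" using trancl_mono[OF _ LR] trancl_id by blast
  then have acyc: "acyclic (LevelSchedule C Bs)" unfolding acyclic_def R_def by auto
  have val: "(x, y) \<in> (LevelSchedule C Bs)\<^sup>+ \<or> (y, x) \<in> (LevelSchedule C Bs)\<^sup>+" if xy: "(x,y) \<in> C" for x y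
  proof -
    have "x \<in> \<Union> (set Bs)" using xy CT un by auto
    then obtain a where a: "a < length Bs" "x \<in> Bs ! a" by (metis UnionE in_set_conv_nth)
    have "y \<in> \<Union> (set Bs)" using xy CT un by auto
    then obtain b where b: "b < length Bs" "y \<in> Bs ! b" by (metis UnionE in_set_conv_nth)
    have "a \<noteq> b" using cf[of "Bs ! a"] a b xy unfolding conflict_free_def by auto
    have sy: "(y,x) \<in> C" using assms(1) xy unfolding block_def sym_def by auto
    have la: "level Bs (Suc a) = Bs ! a" and lb: "level Bs (Suc b) = Bs ! b" unfolding level_def by auto
    show ?thesis
    proof (cases "a < b")
      case True
      have "(x,y) \<in> (LevelSchedule C Bs)\<^sup>+" unfolding LevelSchedule_def
        by (rule outer_reach[where j="Suc a" and i="Suc b"]) (use True a b xy la lb in auto)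
      then show ?thesis by blast
    next
      case False
      then have "b < a" using \<open>a \<noteq> b\<close> by auto
      have "(y,x) \<in> (LevelSchedule C Bs)\<^sup>+" unfolding LevelSchedule_def
        by (rule outer_reach[where j="Suc b" and i="Suc a"]) (use \<open>b < a\<close> a b sy la lb in auto)
      then show ?thesis by blast
    qed
  qed
  show ?thesis unfolding valid_schedule_def schedule_def
    using LR acyc val unfolding R_def by blast
qed

end
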